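(* Let $H\in(1/2,1)$, $\alpha\in(1-H,1)$, $T>0$, $N\ge2$, $h=T/N$, $t_n=nh$. Then there is a constant $C$ (independent of $N$) such that for all $1\le k<l\le N$, all $0<u\le t_{k-1}<s\le t_k$ and all $\tau\in(t_{l-1},t_l]$, $$\int_{t_{k-1}}^{t_{l-1}}\big((t_{l-1}-v)^{\alpha-1}-(\tau-v)^{\alpha-1}\big)|v-u|^{2H-2}\,\mathrm dv\le Ch^\alpha(\tau-s)^{2H-2}.$$ *)

theory Defs
  imports "HOL-Analysis.Analysis"
begin

end

theory Submission imports Defs begin

lemma hi_shift:
  fixes a b p :: real
  assumes "p > -1" "a \<le> b"
  shows "((\<lambda>v. (v - a) powr p) has_integral (b - a) powr (p + 1) / (p + 1)) {a..b}"
proof -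
  have "((\<lambda>x. x powr p) has_integral (b - a) powr (p + 1) / (p + 1)) (cbox 0 (b-a))"
    using has_integral_powr_from_0[of p "b-a"] assms by simp
  from has_integral_affinity'[OF this, of 1 "-a"] show ?thesis by simp
qed

lemma hi_refl:
  fixes a b p :: real
  assumes "p > -1" "a \<le> b"
  shows "((\<lambda>v. (b - v) powr p) has_integral (b - a) powr (p + 1) / (p + 1)) {a..b}"
proof -
  have "((\<lambda>v. (v - (-b)) powr p) has_integral (-a - (-b)) powr (p + 1) / (p + 1)) {-b..-a}"
    using hi_shift[of p "-b" "-a"] assms by simp
  then have "((\<lambda>x. (\<lambda>v. (b - v) powr p) (-x)) has_integral (b - a) powr (p + 1) / (p + 1)) {-b..-a}"
    by (simp add: add.commute)
  then show ?thesis by (subst (asm) has_integral_reflect_real)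
qed

lemma hi_far:
  fixes a b c p :: real
  assumes "p > -1" "a \<le> b" "b < c"
  shows "((\<lambda>v. (c - v) powr p) has_integral ((c - a) powr (p + 1) - (c - b) powr (p + 1)) / (p + 1)) {a..b}"
proof -
  have "((\<lambda>v. - ((c - v) powr (p+1) / (p+1))) has_real_derivative (c - x) powr p) (at x within {a..b})"
    if "x \<in> {a..b}" for x
  proof -
    have "c - x > 0" using that assms by auto
    have p1: "p + 1 \<noteq> 0" using assms by auto
    have p2: "1 + (p*p+p*2) \<noteq> 0"
    proof -
      have "1 + (p*p+p*2) = (p+1)^2" by (simp add: power2_eq_square algebra_simps)
      then show ?thesis using p1 by simp
    qed
    show ?thesis using \<open>c - x > 0\<close> p2 p1
      by (auto intro!: derivative_eq_intros simp: field_simps)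
  qed
  then have "((\<lambda>v. (c - v) powr p) has_integral
     (- ((c - b) powr (p+1) / (p+1))) - (- ((c - a) powr (p+1) / (p+1)))) {a..b}"
    by (intro fundamental_theorem_of_calculus[OF assms(2)])
       (simp add: has_real_derivative_iff_has_vector_derivative)
  then show ?thesis by (simp add: diff_divide_distrib)
qed

lemma si_nonneg:
  fixes f :: "real \<Rightarrow> real"
  assumes "(f has_integral I) {a..b}" "\<And>x. x \<in> {a..b} \<Longrightarrow> 0 \<le> f x" "f \<in> borel_measurable borel"
  shows "set_integrable lborel {a..b} f" "(LBINT v:{a..b}. f v) = I"
proof -
  have "f absolutely_integrable_on {a..b}"
    using assms by (intro nonnegative_absolutely_integrable_1) (auto simp: integrable_on_def)
  then show 1: "set_integrable lborel {a..b} f" unfolding set_integrable_def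
    using assms(3) by (subst (asm) integrable_completion) auto
  show "(LBINT v:{a..b}. f v) = I"
    using set_borel_integral_eq_integral(2)[OF 1] assms(1) by (simp add: integral_unique)
qed

lemma mvt_bd:
  fixes y d h Y \<alpha> :: real
  assumes "0 < Y" "Y \<le> y" "0 < d" "d \<le> h" "\<alpha> < 1"
  shows "y powr (\<alpha>-1) - (y+d) powr (\<alpha>-1) \<le> (1-\<alpha>) * h * Y powr (\<alpha>-2)"
proof -
  have "\<exists>z. y < z \<and> z < y + d \<and> (y+d) powr (\<alpha>-1) - y powr (\<alpha>-1) = (y + d - y) * ((\<alpha>-1) * z powr (\<alpha>-1-1))"
  proof (intro MVT2)
    fix x assume "y \<le> x" "x \<le> y + d"
    then have "x > 0" using assms by auto
    from has_real_derivative_powr[OF this, of "\<alpha>-1"]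
    show "((\<lambda>a. a powr (\<alpha> - 1)) has_real_derivative (\<alpha> - 1) * x powr (\<alpha> - 1 - 1)) (at x)" .
  qed (use assms in auto)
  then obtain z where z: "y < z" "(y+d) powr (\<alpha>-1) - y powr (\<alpha>-1) = d * ((\<alpha>-1) * z powr (\<alpha>-2))"
    by (auto simp: algebra_simps)
  have "z powr (\<alpha>-2) \<le> Y powr (\<alpha>-2)" using z assms by (intro powr_mono2') auto
  moreover have "0 \<le> z powr (\<alpha>-2)" by simp
  ultimately have "d * ((1-\<alpha>) * z powr (\<alpha>-2)) \<le> h * ((1-\<alpha>) * Y powr (\<alpha>-2))"
    using assms by (intro mult_mono) auto
  then show ?thesis using z(2) by (simp add: algebra_simps)
qed

lemma hY_lem:
  fixes h Y \<alpha> :: real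
  assumes h: "h > 0" "h/2 \<le> Y" "\<alpha> < 1"
  shows "h * Y powr (\<alpha>-1) \<le> h powr \<alpha> * 2 powr (1-\<alpha>)"
proof -
  have "Y powr (\<alpha>-1) \<le> (h/2) powr (\<alpha>-1)" using h by (intro powr_mono2') auto
  also have "(h/2) powr (\<alpha>-1) = h powr (\<alpha>-1) * 2 powr (1-\<alpha>)"
  proof -
    have "(h/2) powr (\<alpha>-1) = h powr (\<alpha>-1) / 2 powr (\<alpha>-1)" by (rule powr_divide)
    moreover have "2 powr (1-\<alpha>) = inverse (2 powr (\<alpha>-1))"
      by (metis minus_diff_eq powr_minus)
    ultimately show ?thesis by (metis divide_inverse)
  qed
  finally have "h * Y powr (\<alpha>-1) \<le> h * (h powr (\<alpha>-1) * 2 powr (1-\<alpha>))"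
    using h by (intro mult_left_mono) auto
  also have "h * h powr (\<alpha>-1) = h powr \<alpha>"
  proof -
    have "h powr \<alpha> = h powr (1 + (\<alpha>-1))" by simp
    also have "... = h powr 1 * h powr (\<alpha>-1)" by (rule powr_add)
    finally show ?thesis using h by simp
  qed
  then have "h * (h powr (\<alpha>-1) * 2 powr (1-\<alpha>)) = h powr \<alpha> * 2 powr (1-\<alpha>)"
    by (simp only: mult.assoc[symmetric])
  finally show ?thesis .
qed
lemma div4_powr:
  fixes x p :: real
  shows "(x/4) powr p = 4 powr (-p) * x powr p"
proof -
  have "(x/4) powr p = x powr p / 4 powr p" by (rule powr_divide)
  moreover have "4 powr (-p) = inverse (4 powr p)" by (rule powr_minus)
  ultimately show ?thesis by (metis divide_inverse mult.commute)
qed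

lemma T2_lem:
  fixes a b h \<tau> \<alpha> :: real
  assumes h: "a \<le> b" "b < \<tau>" "\<tau> \<le> b + h" and al: "0 < \<alpha>"
  shows "(b-a) powr \<alpha>/\<alpha> - ((\<tau>-a) powr \<alpha> - (\<tau>-b) powr \<alpha>)/\<alpha> \<le> h powr \<alpha> / \<alpha>"
proof -
  have "(b-a) powr \<alpha> \<le> (\<tau>-a) powr \<alpha>" using h al by (intro powr_mono2) auto
  moreover have "(\<tau>-b) powr \<alpha> \<le> h powr \<alpha>" using h al by (intro powr_mono2) auto
  ultimately have "(b-a) powr \<alpha> - ((\<tau>-a) powr \<alpha> - (\<tau>-b) powr \<alpha>) \<le> h powr \<alpha>" by linarith
  then have "((b-a) powr \<alpha> - ((\<tau>-a) powr \<alpha> - (\<tau>-b) powr \<alpha>))/\<alpha> \<le> h powr \<alpha> / \<alpha>"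
    using al by (intro divide_right_mono) auto
  then show ?thesis by (simp only: diff_divide_distrib)
qed

definition Cst :: "real \<Rightarrow> real \<Rightarrow> real" where
  "Cst H \<alpha> = ((1-\<alpha>) * 2 powr (2*H-1) / (2*H-1) * 2 powr (1-\<alpha>) + 1/\<alpha>) * 4 powr (2-2*H)"

lemma main_bound:
  fixes H \<alpha> a b h \<tau> s u :: real
  assumes H: "1/2 < H" "H < 1" and al: "0 < \<alpha>" "\<alpha> < 1"
    and h: "h > 0" "a + h \<le> b" "u \<le> a" "a < s" "s \<le> a + h" "b < \<tau>" "\<tau> \<le> b + h"
  shows "(LBINT v:{a..b}. ((b - v) powr (\<alpha>-1) - (\<tau> - v) powr (\<alpha>-1)) * \<bar>v - u\<bar> powr (2*H-2))
     \<le> Cst H \<alpha> * h powr \<alpha> * (\<tau> - s) powr (2*H-2)"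
proof -
  define Y where "Y = (b-a)/2"
  define p where "p = 2*H-2"
  define q where "q = \<alpha>-1"
  define K1 where "K1 = (1-\<alpha>)*h*Y powr (\<alpha>-2)"
  define K2 where "K2 = Y powr p"
  define g where "g v = (b-v) powr q - (\<tau>-v) powr q" for v
  define f where "f v = g v * \<bar>v - u\<bar> powr p" for v
  define G where "G v = K1 * (v-a) powr p + K2 * g v" for v
  define IG where "IG = K1 * ((b-a) powr (p+1)/(p+1)) + K2*((b-a) powr (q+1)/(q+1) - ((\<tau>-a) powr (q+1) - (\<tau>-b) powr (q+1))/(q+1))"
  have Ypos: "Y > 0" "h/2 \<le> Y" using h by (auto simp: Y_def)
  have pq: "p > -1" "p < 0" "q > -1" "q < 0" using H al by (auto simp: p_def q_def)
  have ab: "a \<le> b" using h by auto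
  have i1: "set_integrable lborel {a..b} (\<lambda>v. (v-a) powr p)" "(LBINT v:{a..b}. (v-a) powr p) = (b-a) powr (p+1)/(p+1)"
    by (rule si_nonneg[OF hi_shift[OF pq(1) ab]]; simp)+
  have i2: "set_integrable lborel {a..b} (\<lambda>v. (b-v) powr q)" "(LBINT v:{a..b}. (b-v) powr q) = (b-a) powr (q+1)/(q+1)"
    by (rule si_nonneg[OF hi_refl[OF pq(3) ab]]; simp)+
  have i3: "set_integrable lborel {a..b} (\<lambda>v. (\<tau>-v) powr q)" "(LBINT v:{a..b}. (\<tau>-v) powr q) = ((\<tau>-a) powr (q+1) - (\<tau>-b) powr (q+1))/(q+1)"
    by (rule si_nonneg[OF hi_far[OF pq(3) ab]]; use h in simp)+
  have iG: "set_integrable lborel {a..b} G"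
    unfolding G_def g_def
    by (intro set_integral_add(1) set_integrable_mult_right set_integral_diff(1) i1 i2 i3)
  have IG: "(LBINT v:{a..b}. G v) = IG"
    unfolding G_def g_def IG_def
    by (simp add: set_integral_add(2) set_integral_diff(2) set_integrable_mult_right set_integral_diff(1) i1 i2 i3)
  have K1nn: "K1 \<ge> 0" using al h by (simp add: K1_def)
  have K2nn: "K2 \<ge> 0" by (simp add: K2_def)
  have pw: "f v \<le> G v" if v: "a < v" "v < b" for v
  proof -
    have gnn: "g v \<ge> 0" unfolding g_def using v h pq by (auto intro!: powr_mono2')
    have "\<bar>v - u\<bar> powr p \<le> (v-a) powr p" using v h pq by (intro powr_mono2') auto
    then have f1: "f v \<le> g v * (v-a) powr p" unfolding f_def using gnn by (rule mult_left_mono)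
    show ?thesis
    proof (cases "v \<le> a + Y")
      case True
      have "g v \<le> K1"
      proof -
        have "(b-v) powr (\<alpha>-1) - ((b-v)+(\<tau>-b)) powr (\<alpha>-1) \<le> (1-\<alpha>) * h * Y powr (\<alpha>-2)"
          using True h Ypos al by (intro mvt_bd) (auto simp: Y_def field_simps)
        then show ?thesis by (simp add: g_def K1_def q_def)
      qed
      then have "g v * (v-a) powr p \<le> K1 * (v-a) powr p" by (rule mult_right_mono) simp
      moreover have "K2 * g v \<ge> 0" using K2nn gnn by simp
      ultimately show ?thesis using f1 unfolding G_def by linarith
    next
      case False
      have "(v-a) powr p \<le> K2" unfolding K2_def using False Ypos pq by (intro powr_mono2') auto
      then have "g v * (v-a) powr p \<le> K2 * g v" using gnn by (metis mult.commute mult_left_mono)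
      moreover have "K1 * (v-a) powr p \<ge> 0" using K1nn by simp
      ultimately show ?thesis using f1 unfolding G_def by linarith
    qed
  qed
  have Cnn: "Cst H \<alpha> \<ge> 0" unfolding Cst_def using H al by (intro mult_nonneg_nonneg add_nonneg_nonneg) auto
  have RHSnn: "0 \<le> Cst H \<alpha> * h powr \<alpha> * (\<tau> - s) powr (2*H-2)" using Cnn by simp
  have IGle: "IG \<le> Cst H \<alpha> * h powr \<alpha> * (\<tau> - s) powr (2*H-2)"
  proof -
    define c1 where "c1 = (1-\<alpha>) * 2 powr (2*H-1) / (2*H-1) * 2 powr (1-\<alpha>)"
    have ba: "b - a = 2 * Y" by (simp add: Y_def)
    have t1: "K1 * ((b-a) powr (p+1)/(p+1)) = (1-\<alpha>) * 2 powr (2*H-1) / (2*H-1) * (h * Y powr (\<alpha>-1)) * Y powr p"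
    proof -
      have e: "Y powr (\<alpha>-2) * Y powr (2*H-1) = Y powr (\<alpha>-1) * Y powr p"
        by (simp add: powr_add[symmetric] p_def)
      have "K1 * ((b-a) powr (p+1)/(p+1)) = (1-\<alpha>)*h*(Y powr (\<alpha>-2) * Y powr (2*H-1)) * 2 powr (2*H-1)/(2*H-1)"
        unfolding K1_def ba powr_mult by (simp add: p_def algebra_simps)
      also have "... = (1-\<alpha>)*h*(Y powr (\<alpha>-1) * Y powr p) * 2 powr (2*H-1)/(2*H-1)" by (simp only: e)
      finally show ?thesis by (simp add: algebra_simps)
    qed
    have hY: "h * Y powr (\<alpha>-1) \<le> h powr \<alpha> * 2 powr (1-\<alpha>)"
      using hY_lem[of h Y \<alpha>] h Ypos al by simp
    have T1: "K1 * ((b-a) powr (p+1)/(p+1)) \<le> c1 * h powr \<alpha> * Y powr p"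
    proof -
      have "(1-\<alpha>) * 2 powr (2*H-1) / (2*H-1) \<ge> 0" using H al by auto
      then have "(1-\<alpha>) * 2 powr (2*H-1) / (2*H-1) * (h * Y powr (\<alpha>-1)) * Y powr p
           \<le> (1-\<alpha>) * 2 powr (2*H-1) / (2*H-1) * (h powr \<alpha> * 2 powr (1-\<alpha>)) * Y powr p"
        using hY by (intro mult_right_mono mult_left_mono) auto
      then show ?thesis unfolding t1 c1_def by (simp add: algebra_simps)
    qed
    have T2: "(b-a) powr (q+1)/(q+1) - ((\<tau>-a) powr (q+1) - (\<tau>-b) powr (q+1))/(q+1) \<le> h powr \<alpha> / \<alpha>"
      using T2_lem[of a b \<tau> h \<alpha>] ab h al by (simp add: q_def)
    have Yp: "Y powr p \<le> 4 powr (2-2*H) * (\<tau> - s) powr p"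
    proof -
      have "(\<tau> - s)/4 \<le> Y" "0 < (\<tau> - s)/4" using h by (auto simp: Y_def)
      then have "Y powr p \<le> ((\<tau> - s)/4) powr p" using pq by (intro powr_mono2') auto
      also have "... = 4 powr (-p) * (\<tau> - s) powr p" by (rule div4_powr)
      also have "-p = 2-2*H" by (simp add: p_def)
      finally show ?thesis .
    qed
    have "IG \<le> c1 * h powr \<alpha> * Y powr p + Y powr p * (h powr \<alpha> / \<alpha>)"
      unfolding IG_def K2_def using T1 T2 by (intro add_mono mult_left_mono) auto
    also have "... = (c1 + 1/\<alpha>) * h powr \<alpha> * Y powr p" by (simp add: algebra_simps)
    also have "... \<le> (c1 + 1/\<alpha>) * h powr \<alpha> * (4 powr (2-2*H) * (\<tau> - s) powr p)"
      using Yp H al by (intro mult_left_mono) (auto simp: c1_def)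
    also have "... = Cst H \<alpha> * h powr \<alpha> * (\<tau> - s) powr (2*H-2)"
      by (simp add: Cst_def c1_def p_def algebra_simps)
    finally show ?thesis .
  qed
  have fleG: "(LBINT v:{a..b}. f v) \<le> Cst H \<alpha> * h powr \<alpha> * (\<tau> - s) powr (2*H-2)"
  proof (cases "set_integrable lborel {a..b} f")
    case True
    have "AE v\<in>{a..b} in lborel. f v \<le> G v"
      using AE_lborel_singleton[of a] AE_lborel_singleton[of b]
      by eventually_elim (use pw in auto)
    then have "(LBINT v:{a..b}. f v) \<le> (LBINT v:{a..b}. G v)"
      by (intro set_integral_mono_AE True iG)
    then show ?thesis using IG IGle by simp
  next
    case False
    then have "(LBINT v:{a..b}. f v) = 0"
      unfolding set_integrable_def set_lebesgue_integral_def by (simp add: not_integrable_integral_eq)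
    then show ?thesis using RHSnn by simp
  qed
  then show ?thesis by (simp add: f_def g_def p_def q_def)
qed

theorem lemma3p4:
  fixes H \<alpha> T :: real
  assumes "1/2 < H" "H < 1" "1 - H < \<alpha>" "\<alpha> < 1" "T > 0"
  shows "\<exists>C::real. \<forall>N::nat. \<forall>k l::nat. \<forall>u s \<tau>::real.
     (let h = T / real N; t = (\<lambda>n::nat. real n * h) in
       (N \<ge> 2 \<and> 1 \<le> k \<and> k < l \<and> l \<le> N \<and>
        0 < u \<and> u \<le> t (k - 1) \<and> t (k - 1) < s \<and> s \<le> t k \<and>
        t (l - 1) < \<tau> \<and> \<tau> \<le> t l) \<longrightarrow>
       (LBINT v:{t (k - 1)..t (l - 1)}.
          ((t (l - 1) - v) powr (\<alpha> - 1) - (\<tau> - v) powr (\<alpha> - 1)) * \<bar>v - u\<bar> powr (2 * H - 2))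
       \<le> C * h powr \<alpha> * (\<tau> - s) powr (2 * H - 2))"
proof (unfold Let_def, rule exI[of _ "Cst H \<alpha>"], intro allI impI, elim conjE)
  fix N k l :: nat and u s \<tau> :: real
  define h where "h = T / real N"
  assume A: "2 \<le> N" "1 \<le> k" "k < l" "l \<le> N" "0 < u" "u \<le> real (k - 1) * (T / real N)"
    "real (k - 1) * (T / real N) < s" "s \<le> real k * (T / real N)"
    "real (l - 1) * (T / real N) < \<tau>" "\<tau> \<le> real l * (T / real N)"
  have hp: "h > 0" using A(1) assms(5) by (simp add: h_def)
  have rk: "real k = real (k-1) + 1" using A(2) by simp
  have rl: "real l = real (l-1) + 1" using A(2,3) by simp
  have kl: "real (k-1) + 1 \<le> real (l-1)" using A(2,3) by simp
  have ab: "real (k-1) * h + h \<le> real (l-1) * h"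
    using mult_right_mono[OF kl, of h] hp by (simp add: algebra_simps)
  show "(LBINT v:{real (k - 1) * (T / real N)..real (l - 1) * (T / real N)}.
          ((real (l - 1) * (T / real N) - v) powr (\<alpha> - 1) - (\<tau> - v) powr (\<alpha> - 1)) * \<bar>v - u\<bar> powr (2 * H - 2))
       \<le> Cst H \<alpha> * (T / real N) powr \<alpha> * (\<tau> - s) powr (2 * H - 2)"
    unfolding h_def[symmetric]
  proof (rule main_bound)
    show "0 < \<alpha>" using assms by simp
    show "u \<le> real (k-1) * h" "real (k-1) * h < s" "real (l-1) * h < \<tau>"
      using A unfolding h_def by auto
    show "s \<le> real (k-1) * h + h" using A(8) unfolding h_def[symmetric] rk by (simp add: algebra_simps)
    show "\<tau> \<le> real (l-1) * h + h" using A(10) unfolding h_def[symmetric] rl by (simp add: algebra_simps)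
  qed (use assms hp ab in auto)
qed

end
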